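(* Let $1\le p\le 2$, let $\rho>0$ and $\alpha\ge 0$ with $\alpha\le\frac{\pi}{2}-3\rho$, and set $\theta_2=\frac{\pi}{2}+\rho$, $\theta_3=2\rho+\alpha$. Define $E_p(\theta)=|\cos(\theta-\theta_2)|^p+|\cos(\theta-\theta_3)|^p$. Then for every $\theta=2\rho+\alpha+\beta$ with $0\le\beta\le\frac{\pi}{2}-3\rho-\alpha$ we have $E_p(\theta)\ge 1$. *)

theory Defs
  imports Complex_Main
begin

definition E_p :: "real \<Rightarrow> real \<Rightarrow> real \<Rightarrow> real \<Rightarrow> real" where
  "E_p p \<theta>2 \<theta>3 \<theta> = \<bar>cos (\<theta> - \<theta>2)\<bar> powr p + \<bar>cos (\<theta> - \<theta>3)\<bar> powr p"

end

theory Submission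
  imports Defs
begin

lemma sq_le_powr:
  fixes x p :: real
  assumes "0 \<le> x" "x \<le> 1" "p \<le> 2"
  shows "x\<^sup>2 \<le> x powr p"
proof -
  have "x powr 2 \<le> x powr p" using powr_mono'[OF assms(3) assms(1) assms(2)] .
  moreover have "x powr 2 = x\<^sup>2"
    using assms(1) by (cases "x = 0") (auto simp: powr_numeral)
  ultimately show ?thesis by simp
qed

theorem lemma2p11:
  fixes p \<rho> \<alpha> \<beta> \<theta>2 \<theta>3 \<theta> :: real
  assumes "1 \<le> p" and "p \<le> 2"
    and "\<rho> > 0" and "\<alpha> \<ge> 0" and "\<alpha> \<le> pi / 2 - 3 * \<rho>"
    and "\<theta>2 = pi / 2 + \<rho>" and "\<theta>3 = 2 * \<rho> + \<alpha>"
    and "0 \<le> \<beta>" and "\<beta> \<le> pi / 2 - 3 * \<rho> - \<alpha>"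
    and "\<theta> = 2 * \<rho> + \<alpha> + \<beta>"
  shows "E_p p \<theta>2 \<theta>3 \<theta> \<ge> 1"
proof -
  define s where "s = \<rho> + \<alpha> + \<beta>"
  have c1: "cos (\<theta> - \<theta>2) = sin s"
  proof -
    have "\<theta> - \<theta>2 = s - pi/2" using assms(6,10) s_def by simp
    thus ?thesis by (simp add: cos_diff)
  qed
  have c2: "cos (\<theta> - \<theta>3) = cos \<beta>" using assms(7,10) by simp
  have sb: "\<beta> \<le> s" "s \<le> pi/2" using s_def assms by auto
  have sinle: "sin \<beta> \<le> sin s"
    by (rule sin_monotone_2pi_le) (use sb assms(8) in auto)
  have sb0: "0 \<le> sin \<beta>" using assms(8) sb by (intro sin_ge_zero) auto
  have cb0: "0 \<le> cos \<beta>" using assms(8) sb by (intro cos_ge_zero) auto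
  have "1 = (sin \<beta>)\<^sup>2 + (cos \<beta>)\<^sup>2" by simp
  also have "\<dots> \<le> (sin s)\<^sup>2 + (cos \<beta>)\<^sup>2"
    using power_mono[OF sinle sb0, of 2] by linarith
  also have "\<dots> \<le> \<bar>sin s\<bar> powr p + \<bar>cos \<beta>\<bar> powr p"
  proof -
    have "(sin s)\<^sup>2 \<le> \<bar>sin s\<bar> powr p"
      using sq_le_powr[of "\<bar>sin s\<bar>" p] assms(2) by simp
    moreover have "(cos \<beta>)\<^sup>2 \<le> \<bar>cos \<beta>\<bar> powr p"
      using sq_le_powr[of "\<bar>cos \<beta>\<bar>" p] assms(2) by simp
    ultimately show ?thesis by linarith
  qed
  finally show ?thesis unfolding E_p_def c1 c2 .
qed

end
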